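(* Let $k \geq 1$. If there is a (deterministic, or randomized with error at most $1/3$) communication protocol $Q$ for $\operatorname{SSD}_{2k,k+1}$ under the natural partition (Alice holds $x \in \{0,1\}^{2k}$, Bob holds $y \in \{0,1\}^{k+1}$), then there is a communication protocol of the same kind for $\operatorname{IND}_k$ under the natural partition (Alice holds $x \in \{0,1\}^k$, Bob holds $i \in [k]$) whose cost is identical to that of $Q$.
   Context: $\operatorname{SSD}_{n,k} : \{0,1\}^n \times \{0,1\}^k \to \{0,1\}$ is $1$ iff $y$ is a subsequence of $x$ (there exist indices $i_1 < \dots < i_k$ with $x_{i_j} = y_j$). $\operatorname{IND}_k : \{0,1\}^k \times [k] \to \{0,1\}$ is the indexing function $\operatorname{IND}_k(x,i) = x_i$. The cost of a protocol is the maximum number of bits exchanged over all inputs. *)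

theory Defs
  imports "HOL-Probability.Probability" "HOL-Library.Sublist" "HOL-Library.Extended_Nat"
begin

datatype ('a, 'b) protocol =
    Leaf bool
  | AliceNode "'a \<Rightarrow> bool" "('a, 'b) protocol" "('a, 'b) protocol"
  | BobNode "'b \<Rightarrow> bool" "('a, 'b) protocol" "('a, 'b) protocol"

fun run :: "('a, 'b) protocol \<Rightarrow> 'a \<Rightarrow> 'b \<Rightarrow> bool" where
  "run (Leaf v) x y = v"
| "run (AliceNode f P0 P1) x y = (if f x then run P1 x y else run P0 x y)"
| "run (BobNode g P0 P1) x y = (if g y then run P1 x y else run P0 x y)"

fun bits :: "('a, 'b) protocol \<Rightarrow> 'a \<Rightarrow> 'b \<Rightarrow> nat" where
  "bits (Leaf v) x y = 0"
| "bits (AliceNode f P0 P1) x y = Suc (if f x then bits P1 x y else bits P0 x y)"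
| "bits (BobNode g P0 P1) x y = Suc (if g y then bits P1 x y else bits P0 x y)"

definition det_cost :: "('a, 'b) protocol \<Rightarrow> 'a set \<Rightarrow> 'b set \<Rightarrow> enat" where
  "det_cost P X Y = (SUP xy \<in> X \<times> Y. enat (bits P (fst xy) (snd xy)))"

definition det_computes ::
  "('a, 'b) protocol \<Rightarrow> ('a \<Rightarrow> 'b \<Rightarrow> bool) \<Rightarrow> 'a set \<Rightarrow> 'b set \<Rightarrow> bool" where
  "det_computes P F X Y \<longleftrightarrow> (\<forall>x\<in>X. \<forall>y\<in>Y. run P x y = F x y)"

text \<open>Randomized (public-coin) protocols: a probability distribution over
  deterministic protocol trees.\<close>

definition rand_computes ::
  "('a, 'b) protocol pmf \<Rightarrow> ('a \<Rightarrow> 'b \<Rightarrow> bool) \<Rightarrow> 'a set \<Rightarrow> 'b set \<Rightarrow> bool" where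
  "rand_computes Q F X Y \<longleftrightarrow>
     (\<forall>x\<in>X. \<forall>y\<in>Y. measure_pmf.prob Q {P. run P x y \<noteq> F x y} \<le> 1/3)"

definition rand_cost :: "('a, 'b) protocol pmf \<Rightarrow> 'a set \<Rightarrow> 'b set \<Rightarrow> enat" where
  "rand_cost Q X Y = (SUP P \<in> set_pmf Q. det_cost P X Y)"

definition bitstrings :: "nat \<Rightarrow> bool list set" where
  "bitstrings n = {x. length x = n}"

definition SSD :: "bool list \<Rightarrow> bool list \<Rightarrow> bool" where
  "SSD x y \<longleftrightarrow> subseq y x"

text \<open>IND_k(x,i) = x_i, positions 1-indexed.\<close>
definition IND :: "bool list \<Rightarrow> nat \<Rightarrow> bool" where
  "IND x i = x ! (i - 1)"

end

theory Submission
  imports Defs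
begin

definition enc :: "bool \<Rightarrow> bool list" where
  "enc b = (if b then [False, True] else [True, False])"

definition aenc :: "bool list \<Rightarrow> bool list" where
  "aenc x = concat (map enc x)"

lemma aenc_Cons: "aenc (b # xs) = enc b @ aenc xs"
  by (simp add: aenc_def)

lemma aenc_len: "length (aenc x) = 2 * length x"
  by (induction x) (simp_all add: aenc_def enc_def)

lemma aenc_count: "count_list (aenc x) True = length x"
  by (induction x) (simp_all add: aenc_def enc_def)

lemma subseq_repl_True: "subseq (replicate m True) ys \<longleftrightarrow> m \<le> count_list ys True"
proof (induction ys arbitrary: m)
  case Nil then show ?case by (cases m) simp_all
next
  case (Cons y ys)
  show ?case
  proof (cases m)
    case 0 then show ?thesis by simp
  next
    case (Suc n)
    have r: "replicate m True = True # replicate n True" using Suc by simp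
    show ?thesis
    proof (cases y)
      case True
      then show ?thesis unfolding r using Cons.IH[of n] Suc by simp
    next
      case False
      have "subseq (True # replicate n True) ys = (m \<le> count_list ys True)"
        using Cons.IH[of m] r by simp
      then show ?thesis unfolding r using False by simp
    qed
  qed
qed

lemma key:
  "1 \<le> i \<Longrightarrow> i \<le> length x \<Longrightarrow>
   subseq (replicate i False @ replicate (length x + 1 - i) True) (aenc x) \<longleftrightarrow> x ! (i - 1)"
proof (induction x arbitrary: i)
  case Nil then show ?case by simp
next
  case (Cons b xs)
  show ?case
  proof (cases "i = 1")
    case True
    have l: "replicate i False @ replicate (length (b # xs) + 1 - i) True
          = False # replicate (Suc (length xs)) True" using True by simp
    show ?thesis
    proof (cases b)
      case True
      have "subseq (replicate (Suc (length xs)) True) (True # aenc xs)"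
        unfolding subseq_repl_True by (simp add: aenc_count)
      then show ?thesis unfolding l using True \<open>i = 1\<close> by (simp add: aenc_Cons enc_def)
    next
      case False
      have "\<not> subseq (replicate (Suc (length xs)) True) (aenc xs)"
        unfolding subseq_repl_True by (simp add: aenc_count)
      then show ?thesis unfolding l using False \<open>i = 1\<close> by (simp add: aenc_Cons enc_def)
    qed
  next
    case False
    then obtain j where j: "i = Suc j" "1 \<le> j" "j \<le> length xs" using Cons.prems
      by (cases i) auto
    then obtain j' where j': "j = Suc j'" by (cases j) auto
    have IH: "subseq (replicate j False @ replicate (length xs + 1 - j) True) (aenc xs) \<longleftrightarrow> xs ! (j - 1)"
      using Cons.IH j by blast
    have l: "replicate i False @ replicate (length (b # xs) + 1 - i) True
          = False # (replicate j False @ replicate (length xs + 1 - j) True)" using j by simp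
    have l2: "replicate j False @ replicate (length xs + 1 - j) True
          = False # (replicate j' False @ replicate (length xs + 1 - j) True)" using j' by simp
    have r: "(b # xs) ! (i - 1) = xs ! (j - 1)" using j j' by simp
    show ?thesis
    proof (cases b)
      case True
      show ?thesis unfolding l r using True IH
        by (simp only: aenc_Cons enc_def if_True append_Cons append_Nil subseq_Cons2_iff l2 simp_thms) simp
    next
      case False
      show ?thesis unfolding l r using False IH
        by (simp only: aenc_Cons enc_def if_False append_Cons append_Nil subseq_Cons2_iff) simp
    qed
  qed
qed

fun reduce :: "('a, 'b) protocol \<Rightarrow> ('c \<Rightarrow> 'a) \<Rightarrow> ('d \<Rightarrow> 'b) \<Rightarrow> ('c, 'd) protocol" where
  "reduce (Leaf v) fa fb = Leaf v"
| "reduce (AliceNode f P0 P1) fa fb = AliceNode (f \<circ> fa) (reduce P0 fa fb) (reduce P1 fa fb)"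
| "reduce (BobNode g P0 P1) fa fb = BobNode (g \<circ> fb) (reduce P0 fa fb) (reduce P1 fa fb)"

lemma run_reduce: "run (reduce P fa fb) x y = run P (fa x) (fb y)"
  by (induction P) simp_all

lemma bits_reduce: "bits (reduce P fa fb) x y = bits P (fa x) (fb y)"
  by (induction P) simp_all

fun pad :: "nat \<Rightarrow> ('a, 'b) protocol \<Rightarrow> ('a, 'b) protocol" where
  "pad 0 P = P"
| "pad (Suc n) P = AliceNode (\<lambda>_. True) (pad n P) (pad n P)"

lemma run_pad: "run (pad n P) x y = run P x y"
  by (induction n) simp_all

lemma bits_pad: "bits (pad n P) x y = n + bits P x y"
  by (induction n) simp_all

lemma det_cost_Max:
  assumes "finite X" "finite Y" "X \<noteq> {}" "Y \<noteq> {}"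
  shows "det_cost P X Y = enat (Max ((\<lambda>xy. bits P (fst xy) (snd xy)) ` (X \<times> Y)))"
proof -
  let ?g = "\<lambda>xy. bits P (fst xy) (snd xy)"
  have fin: "finite (?g ` (X \<times> Y))" and ne: "?g ` (X \<times> Y) \<noteq> {}" using assms by auto
  have "det_cost P X Y = Sup (enat ` (?g ` (X \<times> Y)))"
    unfolding det_cost_def by (simp add: image_image)
  also have "\<dots> = Max (enat ` (?g ` (X \<times> Y)))"
    using fin ne by (intro cSup_eq_Max) auto
  also have "\<dots> = enat (Max (?g ` (X \<times> Y)))"
    using fin ne by (intro mono_Max_commute[symmetric]) (auto simp: mono_def)
  finally show ?thesis .
qed

lemma bitstrings_finite: "finite (bitstrings n)"
proof -
  have "bitstrings n = {xs. set xs \<subseteq> (UNIV :: bool set) \<and> length xs = n}"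
    by (auto simp: bitstrings_def)
  then show ?thesis using finite_lists_length_eq[of "UNIV :: bool set" n] by simp
qed

lemma bitstrings_ne: "bitstrings n \<noteq> {}"
  by (auto simp: bitstrings_def intro!: exI[of _ "replicate n False"])


theorem mainTheorem6:
  fixes k :: nat
  assumes "k \<ge> 1"
  shows "(\<forall>Q. det_computes Q SSD (bitstrings (2*k)) (bitstrings (k+1)) \<longrightarrow>
            (\<exists>P. det_computes P IND (bitstrings k) {1..k} \<and>
                 det_cost P (bitstrings k) {1..k} =
                 det_cost Q (bitstrings (2*k)) (bitstrings (k+1))))
       \<and> (\<forall>Q. rand_computes Q SSD (bitstrings (2*k)) (bitstrings (k+1)) \<longrightarrow>
            (\<exists>P. rand_computes P IND (bitstrings k) {1..k} \<and>
                 rand_cost P (bitstrings k) {1..k} =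
                 rand_cost Q (bitstrings (2*k)) (bitstrings (k+1))))"
proof -
  define bk where "bk = (\<lambda>i::nat. replicate i False @ replicate (k+1-i) True)"
  define X where "X = bitstrings (2*k)"
  define Y where "Y = bitstrings (k+1)"
  define Xk where "Xk = bitstrings k"
  define Yk where "Yk = {1..k}"
  have finX: "finite X" "X \<noteq> {}" "finite Y" "Y \<noteq> {}"
    unfolding X_def Y_def using bitstrings_finite bitstrings_ne by auto
  have finXk: "finite Xk" "Xk \<noteq> {}" "finite Yk" "Yk \<noteq> {}"
    unfolding Xk_def Yk_def using bitstrings_finite bitstrings_ne assms by auto
  have memX: "aenc x \<in> X" if "x \<in> Xk" for x
    using that unfolding X_def Xk_def bitstrings_def by (simp add: aenc_len)
  have memY: "bk i \<in> Y" if "i \<in> Yk" for i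
    using that unfolding Y_def Yk_def bitstrings_def bk_def by simp
  have corr: "SSD (aenc x) (bk i) = IND x i" if "x \<in> Xk" "i \<in> Yk" for x i
  proof -
    have lx: "length x = k" using that(1) unfolding Xk_def bitstrings_def by simp
    have "1 \<le> i" "i \<le> length x" using that(2) lx unfolding Yk_def by auto
    from key[OF this] show ?thesis unfolding SSD_def IND_def bk_def lx .
  qed
  define c where "c q = Max ((\<lambda>xy. bits q (fst xy) (snd xy)) ` (X \<times> Y))" for q
  define d where "d q = Max ((\<lambda>xy. bits (reduce q aenc bk) (fst xy) (snd xy)) ` (Xk \<times> Yk))" for q
  define T where "T q = pad (c q - d q) (reduce q aenc bk)" for q
  have runT: "run (T q) x i = run q (aenc x) (bk i)" for q x i
    unfolding T_def by (simp add: run_pad run_reduce)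
  have costT: "det_cost (T q) Xk Yk = det_cost q X Y" for q
  proof -
    have dc: "d q \<le> c q"
      unfolding d_def c_def
    proof (rule Max_mono)
      show "(\<lambda>xy. bits (reduce q aenc bk) (fst xy) (snd xy)) ` (Xk \<times> Yk) \<noteq> {}"
        using finXk by auto
      show "(\<lambda>xy. bits (reduce q aenc bk) (fst xy) (snd xy)) ` (Xk \<times> Yk)
            \<subseteq> (\<lambda>xy. bits q (fst xy) (snd xy)) ` (X \<times> Y)"
      proof
        fix z assume "z \<in> (\<lambda>xy. bits (reduce q aenc bk) (fst xy) (snd xy)) ` (Xk \<times> Yk)"
        then obtain x i where xi: "x \<in> Xk" "i \<in> Yk" "z = bits q (aenc x) (bk i)"
          by (auto simp: bits_reduce)
        then show "z \<in> (\<lambda>xy. bits q (fst xy) (snd xy)) ` (X \<times> Y)"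
          using memX memY by (intro image_eqI[of _ _ "(aenc x, bk i)"]) auto
      qed
      show "finite ((\<lambda>xy. bits q (fst xy) (snd xy)) ` (X \<times> Y))" using finX by simp
    qed
    have "det_cost (T q) Xk Yk
        = enat (Max ((\<lambda>xy. (c q - d q) + bits (reduce q aenc bk) (fst xy) (snd xy)) ` (Xk \<times> Yk)))"
      unfolding det_cost_Max[OF finXk(1) finXk(3) finXk(2) finXk(4)] T_def bits_pad by simp
    also have "\<dots> = enat ((c q - d q) + d q)"
      unfolding d_def using finXk
      by (subst add.commute, subst Max_add_commute) (auto simp: add.commute)
    also have "\<dots> = enat (c q)" using dc by simp
    also have "\<dots> = det_cost q X Y" unfolding c_def det_cost_Max[OF finX(1) finX(3) finX(2) finX(4)] ..
    finally show ?thesis .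
  qed
  have part1: "\<exists>P. det_computes P IND Xk Yk \<and> det_cost P Xk Yk = det_cost Q X Y"
    if "det_computes Q SSD X Y" for Q
  proof (intro exI conjI)
    show "det_computes (T Q) IND Xk Yk"
      using that memX memY corr unfolding det_computes_def runT by metis
    show "det_cost (T Q) Xk Yk = det_cost Q X Y" by (rule costT)
  qed
  have part2: "\<exists>P. rand_computes P IND Xk Yk \<and> rand_cost P Xk Yk = rand_cost Q X Y"
    if "rand_computes Q SSD X Y" for Q
  proof (intro exI conjI)
    show "rand_computes (map_pmf T Q) IND Xk Yk"
      unfolding rand_computes_def
    proof (intro ballI)
      fix x i assume xi: "x \<in> Xk" "i \<in> Yk"
      have "T -` {P. run P x i \<noteq> IND x i} = {q. run q (aenc x) (bk i) \<noteq> SSD (aenc x) (bk i)}"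
        using corr[OF xi] by (auto simp: runT)
      then show "measure_pmf.prob (map_pmf T Q) {P. run P x i \<noteq> IND x i} \<le> 1/3"
        using that memX[OF xi(1)] memY[OF xi(2)] unfolding rand_computes_def
        by (simp add: measure_map_pmf)
    qed
    show "rand_cost (map_pmf T Q) Xk Yk = rand_cost Q X Y"
      unfolding rand_cost_def set_map_pmf image_image costT ..
  qed
  show ?thesis using part1 part2 unfolding X_def Y_def Xk_def Yk_def by blast
qed

end
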